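(* There is a universal constant $K>0$ such that the following holds. Let $\sigma$ be a full-rank $d$-dimensional quantum state with eigendecomposition $\sigma=\sum_iq(i)|e_i\rangle\langle e_i|$ and minimum eigenvalue $\gamma$; let $\rho_1,\dots,\rho_T$ be $d$-dimensional states, $\varrho=\rho_1\otimes\cdots\otimes\rho_T$, $\rho=\frac1T\sum_t\rho_t$, $\mu=D_{\chi^2}(\rho\,\|\,\sigma)$. Let $C=\sum_{i,j}\frac{|e_je_i\rangle\langle e_ie_j|}{q(i,j)}$ with $q(i,j)=\frac{q(i)+q(j)}2$, let $C_{st}$ denote $C$ applied to tensor components $s,t$ of $(\mathbb C^d)^{\otimes T}$, and $M_t=\frac1{T^2}\sum_{s\ne t}C_{st}$. Then $$\sum_{t=1}^T\mathbb E_{\varrho\otimes\varrho}\big[(M_t\otimes I)F_t(M_t\otimes I)F_t\big]\ge\Big(\frac1T-\frac2{T^3}\sum_{t=1}^T\mathbb E_{\rho_t\otimes\rho_t}[C]\Big)-K\Big(\frac{d^2}{T^2}+\frac{d\mu}{\gamma T^2}\Big).$$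
   Context: $\mathbb E_\tau[Y]=\mathrm{Tr}[\tau Y]$. $F_t$ is the swap operator on $(\mathbb C^d)^{\otimes T}\otimes(\mathbb C^d)^{\otimes T}$ exchanging the $t$th tensor component of the first copy with the $t$th tensor component of the second copy. Bures $\chi^2$-divergence: writing $\sigma=U\,\mathrm{diag}(q_1,\dots,q_d)U^\dagger$ and $\rho'=U^\dagger\rho U$, $D_{\chi^2}(\rho\,\|\,\sigma)=\sum_{i,j}\frac{2}{q_i+q_j}|\rho'_{ij}|^2-1$. *)

theory Defs
  imports Complex_Main
begin

text \<open>Finite-dimensional operators are represented by their matrix entries
  with respect to a computational basis indexed by a finite index set.
  A d-dimensional operator is a function nat => nat => complex restricted
  to indices below d.  The basis of the T-fold tensor power of C^d is indexed
  by lists of length T with entries below d.\<close>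

definition idx :: "nat \<Rightarrow> nat \<Rightarrow> nat list set" where
  "idx d T = {xs. length xs = T \<and> set xs \<subseteq> {..<d}}"

definition mmul :: "'i set \<Rightarrow> ('i \<Rightarrow> 'i \<Rightarrow> complex) \<Rightarrow> ('i \<Rightarrow> 'i \<Rightarrow> complex) \<Rightarrow> ('i \<Rightarrow> 'i \<Rightarrow> complex)" where
  "mmul I A B = (\<lambda>x y. \<Sum>z\<in>I. A x z * B z y)"

definition mtrace :: "'i set \<Rightarrow> ('i \<Rightarrow> 'i \<Rightarrow> complex) \<Rightarrow> complex" where
  "mtrace I A = (\<Sum>x\<in>I. A x x)"

definition expect :: "'i set \<Rightarrow> ('i \<Rightarrow> 'i \<Rightarrow> complex) \<Rightarrow> ('i \<Rightarrow> 'i \<Rightarrow> complex) \<Rightarrow> complex" where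
  "expect I \<tau> Y = mtrace I (mmul I \<tau> Y)"

definition tens :: "('i \<Rightarrow> 'i \<Rightarrow> complex) \<Rightarrow> ('j \<Rightarrow> 'j \<Rightarrow> complex) \<Rightarrow> ('i \<times> 'j \<Rightarrow> 'i \<times> 'j \<Rightarrow> complex)" where
  "tens A B = (\<lambda>(x, x') (y, y'). A x y * B x' y')"

definition idop :: "'i \<Rightarrow> 'i \<Rightarrow> complex" where
  "idop = (\<lambda>x y. if x = y then 1 else 0)"

definition is_state :: "nat \<Rightarrow> (nat \<Rightarrow> nat \<Rightarrow> complex) \<Rightarrow> bool" where
  "is_state d \<rho> \<longleftrightarrow>
     (\<forall>a<d. \<forall>b<d. \<rho> a b = cnj (\<rho> b a)) \<and>
     (\<forall>v :: nat \<Rightarrow> complex. 0 \<le> Re (\<Sum>a<d. \<Sum>b<d. cnj (v a) * \<rho> a b * v b)) \<and>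
     (\<Sum>a<d. \<rho> a a) = 1"

text \<open>Vectors e 0, ..., e (d-1) (e i a = a-th coordinate of e_i) form an orthonormal basis of C^d.\<close>
definition orthonormal_basis :: "nat \<Rightarrow> (nat \<Rightarrow> nat \<Rightarrow> complex) \<Rightarrow> bool" where
  "orthonormal_basis d e \<longleftrightarrow>
     (\<forall>i<d. \<forall>j<d. (\<Sum>a<d. cnj (e i a) * e j a) = (if i = j then 1 else 0))"

text \<open>Bures chi^2 divergence, with sigma = U diag(q) U^dagger where the columns of U are the e_i,
  and rho' = U^dagger rho U.\<close>
definition bures_chi2 :: "nat \<Rightarrow> (nat \<Rightarrow> nat \<Rightarrow> complex) \<Rightarrow> (nat \<Rightarrow> real) \<Rightarrow> (nat \<Rightarrow> nat \<Rightarrow> complex) \<Rightarrow> real" where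
  "bures_chi2 d e q \<rho> =
     (\<Sum>i<d. \<Sum>j<d. 2 / (q i + q j) *
        (cmod (\<Sum>a<d. \<Sum>b<d. cnj (e i a) * \<rho> a b * e j b))\<^sup>2) - 1"

definition Cop :: "nat \<Rightarrow> (nat \<Rightarrow> nat \<Rightarrow> complex) \<Rightarrow> (nat \<Rightarrow> real) \<Rightarrow> (nat \<times> nat \<Rightarrow> nat \<times> nat \<Rightarrow> complex)" where
  "Cop d e q = (\<lambda>(a, b) (c, c'). \<Sum>i<d. \<Sum>j<d.
      e j a * e i b * cnj (e i c) * cnj (e j c') / complex_of_real ((q i + q j) / 2))"

definition Cst :: "nat \<Rightarrow> (nat \<times> nat \<Rightarrow> nat \<times> nat \<Rightarrow> complex) \<Rightarrow> nat \<Rightarrow> nat \<Rightarrow> (nat list \<Rightarrow> nat list \<Rightarrow> complex)" where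
  "Cst T C s t = (\<lambda>x y. if (\<forall>r<T. r \<noteq> s \<and> r \<noteq> t \<longrightarrow> x ! r = y ! r)
                        then C (x ! s, x ! t) (y ! s, y ! t) else 0)"

definition Mop :: "nat \<Rightarrow> (nat \<times> nat \<Rightarrow> nat \<times> nat \<Rightarrow> complex) \<Rightarrow> nat \<Rightarrow> (nat list \<Rightarrow> nat list \<Rightarrow> complex)" where
  "Mop T C t = (\<lambda>x y. (1 / (of_nat T)\<^sup>2) * (\<Sum>s\<in>{..<T} - {t}. Cst T C s t x y))"

definition Fswap :: "nat \<Rightarrow> (nat list \<times> nat list \<Rightarrow> nat list \<times> nat list \<Rightarrow> complex)" where
  "Fswap t = (\<lambda>(x, x') (y, y'). if x = y[t := y' ! t] \<and> x' = y'[t := y ! t] then 1 else 0)"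

text \<open>rho_1 (x) ... (x) rho_T (components indexed 0..T-1).\<close>
definition tensor_states :: "nat \<Rightarrow> (nat \<Rightarrow> nat \<Rightarrow> nat \<Rightarrow> complex) \<Rightarrow> (nat list \<Rightarrow> nat list \<Rightarrow> complex)" where
  "tensor_states T \<rho>s = (\<lambda>x y. \<Prod>t<T. \<rho>s t (x ! t) (y ! t))"

end

theory Submission
  imports Defs "Jordan_Normal_Form.Determinant"
begin

lemma onb_complete:
  assumes "orthonormal_basis d e" "a < d" "b < d"
  shows "(\<Sum>i<d. e i a * cnj (e i b)) = (if a = b then 1 else 0)"
proof -
  define U where "U = mat d d (\<lambda>(a,i). e i a)"
  define V where "V = mat d d (\<lambda>(i,a). cnj (e i a))"
  have U: "U \<in> carrier_mat d d" and V: "V \<in> carrier_mat d d" by (auto simp: U_def V_def)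
  have "V * U = 1\<^sub>m d"
  proof (rule eq_matI)
    fix i j assume ij: "i < dim_row (1\<^sub>m d)" "j < dim_col (1\<^sub>m d)"
    have "(V * U) $$ (i,j) = (\<Sum>a<d. cnj (e i a) * e j a)"
      using ij by (simp add: U_def V_def scalar_prod_def lessThan_atLeast0)
    also have "\<dots> = 1\<^sub>m d $$ (i,j)" using assms(1) ij unfolding orthonormal_basis_def by auto
    finally show "(V * U) $$ (i,j) = 1\<^sub>m d $$ (i,j)" .
  qed (auto simp: U_def V_def)
  hence "U * V = 1\<^sub>m d" using mat_mult_left_right_inverse[OF V U] by blast
  hence "(U * V) $$ (a,b) = 1\<^sub>m d $$ (a,b)" by simp
  thus ?thesis using assms(2,3) by (simp add: U_def V_def scalar_prod_def lessThan_atLeast0)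
qed

lemma idx_Suc: "idx d (Suc T) = (\<lambda>(a,xs). a # xs) ` ({..<d} \<times> idx d T)"
  unfolding idx_def by (force simp: length_Suc_conv image_iff)

lemma sum_idx_prod:
  "(\<Sum>x\<in>idx d T. \<Prod>r<T. f r (x ! r)) = (\<Prod>r<T. \<Sum>a<d. (f r a :: complex))"
proof (induction T arbitrary: f)
  case 0
  have "idx d 0 = {[]}" by (auto simp: idx_def)
  thus ?case by simp
next
  case (Suc T)
  have inj: "inj_on (\<lambda>(a,xs). a # xs) ({..<d} \<times> idx d T)" by (auto simp: inj_on_def)
  have "(\<Sum>x\<in>idx d (Suc T). \<Prod>r<Suc T. f r (x ! r))
      = (\<Sum>(a,xs)\<in>{..<d} \<times> idx d T. \<Prod>r<Suc T. f r ((a#xs) ! r))"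
    unfolding idx_Suc by (subst sum.reindex[OF inj]) (simp add: case_prod_unfold)
  also have "\<dots> = (\<Sum>(a,xs)\<in>{..<d} \<times> idx d T. f 0 a * (\<Prod>r<T. f (Suc r) (xs ! r)))"
    by (intro sum.cong refl) (auto simp: prod.lessThan_Suc_shift simp del: prod.lessThan_Suc)
  also have "\<dots> = (\<Sum>a<d. f 0 a * (\<Sum>xs\<in>idx d T. \<Prod>r<T. f (Suc r) (xs ! r)))"
    by (simp add: sum.cartesian_product[symmetric] sum_distrib_left)
  also have "\<dots> = (\<Sum>a<d. f 0 a) * (\<Prod>r<T. \<Sum>a<d. f (Suc r) a)"
    using Suc.IH[of "\<lambda>r. f (Suc r)"] by (simp add: sum_distrib_right)
  also have "\<dots> = (\<Prod>r<Suc T. \<Sum>a<d. f r a)" by (simp only: prod.lessThan_Suc_shift)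
  finally show ?case .
qed

definition prodk :: "nat \<Rightarrow> (nat \<Rightarrow> nat \<times> nat \<Rightarrow> nat \<times> nat \<Rightarrow> complex) \<Rightarrow> (nat list \<times> nat list \<Rightarrow> nat list \<times> nat list \<Rightarrow> complex)" where
  "prodk T P = (\<lambda>(x,x') (y,y'). \<Prod>r<T. P r (x!r, x'!r) (y!r, y'!r))"

lemma sum_J_prod:
  "(\<Sum>X\<in>idx d T \<times> idx d T. \<Prod>r<T. f r (fst X ! r, snd X ! r)) = (\<Prod>r<T. \<Sum>p\<in>{..<d}\<times>{..<d}. (f r p :: complex))"
proof -
  have "(\<Sum>X\<in>idx d T \<times> idx d T. \<Prod>r<T. f r (fst X ! r, snd X ! r))
     = (\<Sum>x\<in>idx d T. \<Sum>x'\<in>idx d T. \<Prod>r<T. f r (x ! r, x' ! r))"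
    by (simp add: sum.cartesian_product split_beta)
  also have "\<dots> = (\<Sum>x\<in>idx d T. \<Prod>r<T. \<Sum>b<d. f r (x ! r, b))"
    by (subst sum_idx_prod) simp
  also have "\<dots> = (\<Prod>r<T. \<Sum>a<d. \<Sum>b<d. f r (a, b))"
    by (subst sum_idx_prod) simp
  also have "\<dots> = (\<Prod>r<T. \<Sum>p\<in>{..<d}\<times>{..<d}. f r p)"
    by (simp add: sum.cartesian_product)
  finally show ?thesis .
qed

abbreviation "D2 d \<equiv> {..<d} \<times> {..<(d::nat)}"

lemma mmul_prodk: "mmul (idx d T \<times> idx d T) (prodk T P) (prodk T Q) = prodk T (\<lambda>r. mmul (D2 d) (P r) (Q r))"
proof (intro ext)
  fix X Y :: "nat list \<times> nat list"
  obtain x x' y y' where XY: "X = (x,x')" "Y = (y,y')" by (cases X, cases Y)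
  show "mmul (idx d T \<times> idx d T) (prodk T P) (prodk T Q) X Y = prodk T (\<lambda>r. mmul (D2 d) (P r) (Q r)) X Y"
    unfolding XY mmul_def prodk_def
    using sum_J_prod[where f="\<lambda>r p. P r (x!r, x'!r) p * Q r p (y!r, y'!r)" and d=d and T=T]
    by (simp add: case_prod_unfold prod.distrib)
qed

lemma expect_prodk: "expect (idx d T \<times> idx d T) (prodk T P) (prodk T Q) = (\<Prod>r<T. expect (D2 d) (P r) (Q r))"
  unfolding expect_def mtrace_def mmul_prodk
  using sum_J_prod[where f="\<lambda>r p. mmul (D2 d) (P r) (Q r) p p" and d=d and T=T]
  by (simp add: prodk_def case_prod_unfold)


definition eqJ :: "'i set \<Rightarrow> ('i \<Rightarrow> 'i \<Rightarrow> complex) \<Rightarrow> ('i \<Rightarrow> 'i \<Rightarrow> complex) \<Rightarrow> bool" where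
  "eqJ I A B \<longleftrightarrow> (\<forall>X\<in>I. \<forall>Y\<in>I. A X Y = B X Y)"

lemma eqJ_mmul: "eqJ I A A' \<Longrightarrow> eqJ I B B' \<Longrightarrow> eqJ I (mmul I A B) (mmul I A' B')"
  unfolding eqJ_def mmul_def by (auto intro!: sum.cong)

lemma eqJ_expect: "eqJ I A A' \<Longrightarrow> eqJ I B B' \<Longrightarrow> expect I A B = expect I A' B'"
  unfolding eqJ_def expect_def mtrace_def mmul_def by (auto intro!: sum.cong)

lemma mmul_sum_left: "mmul I (\<lambda>X Y. \<Sum>a\<in>K. c a * A a X Y) B = (\<lambda>X Y. \<Sum>a\<in>K. c a * mmul I (A a) B X Y)"
  unfolding mmul_def by (auto simp: sum_distrib_right sum_distrib_left mult.assoc intro!: ext sum.swap)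

lemma mmul_sum_right: "mmul I B (\<lambda>X Y. \<Sum>a\<in>K. c a * A a X Y) = (\<lambda>X Y. \<Sum>a\<in>K. c a * mmul I B (A a) X Y)"
  unfolding mmul_def by (auto simp: sum_distrib_right sum_distrib_left mult.assoc mult.left_commute intro!: ext sum.swap)

lemma expect_sum_right: "expect I B (\<lambda>X Y. \<Sum>a\<in>K. c a * A a X Y) = (\<Sum>a\<in>K. c a * expect I B (A a))"
  unfolding expect_def mtrace_def mmul_sum_right by (simp add: sum_distrib_left sum.swap[of _ I])

lemma tens_prodk: "tens (tensor_states T \<rho>s) (tensor_states T \<rho>s) = prodk T (\<lambda>r. tens (\<rho>s r) (\<rho>s r))"
  unfolding tens_def tensor_states_def prodk_def by (auto intro!: ext simp: prod.distrib)

lemma prod_ind: "finite A \<Longrightarrow> (\<Prod>r\<in>A. (if P r then 1 else 0 :: complex)) = (if \<forall>r\<in>A. P r then 1 else 0)"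
  by (induction A rule: finite_induct) auto

lemma prod_idop: "length x = T \<Longrightarrow> length y = T \<Longrightarrow> (\<Prod>r<T. (idop (x!r) (y!r) :: complex)) = idop x y"
  unfolding idop_def by (subst prod_ind) (auto simp: list_eq_iff_nth_eq)

definition swp :: "nat \<times> nat \<Rightarrow> nat \<times> nat \<Rightarrow> complex" where
  "swp = (\<lambda>(a,a') (c,c'). if a = c' \<and> a' = c then 1 else 0)"

definition Fl :: "nat \<Rightarrow> nat \<Rightarrow> nat \<times> nat \<Rightarrow> nat \<times> nat \<Rightarrow> complex" where
  "Fl t r = (if r = t then swp else idop)"

lemma Fswap_prodk: assumes "t < T" shows "eqJ (idx d T \<times> idx d T) (Fswap t) (prodk T (Fl t))"
  unfolding eqJ_def
proof (intro ballI)
  fix X Y assume X: "X \<in> idx d T \<times> idx d T" and Y: "Y \<in> idx d T \<times> idx d T"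
  obtain x x' y y' where XY: "X = (x,x')" "Y = (y,y')" by (cases X, cases Y)
  have len: "length x = T" "length x' = T" "length y = T" "length y' = T" using X Y XY by (auto simp: idx_def)
  have "prodk T (Fl t) X Y = (\<Prod>r<T. (if (if r = t then x!r = y'!r \<and> x'!r = y!r else x!r = y!r \<and> x'!r = y'!r) then 1 else 0))"
    unfolding XY prodk_def Fl_def swp_def idop_def by (auto intro!: prod.cong)
  also have "\<dots> = Fswap t X Y"
    unfolding XY Fswap_def using len assms
    by (subst prod_ind) (auto simp: list_eq_iff_nth_eq nth_list_update)
  finally show "Fswap t X Y = prodk T (Fl t) X Y" by simp
qed

definition Eop :: "(nat \<Rightarrow> nat \<Rightarrow> complex) \<Rightarrow> nat \<Rightarrow> nat \<Rightarrow> nat \<Rightarrow> nat \<Rightarrow> complex" where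
  "Eop e i j = (\<lambda>a c. e i a * cnj (e j c))"

definition Lop :: "(nat \<Rightarrow> nat \<Rightarrow> complex) \<Rightarrow> nat \<Rightarrow> nat \<Rightarrow> nat \<Rightarrow> nat \<Rightarrow> nat \<Rightarrow> nat \<Rightarrow> nat \<Rightarrow> complex" where
  "Lop e s t i j r = (if r = s then Eop e j i else if r = t then Eop e i j else idop)"

definition Wc :: "(nat \<Rightarrow> real) \<Rightarrow> nat \<Rightarrow> nat \<Rightarrow> complex" where
  "Wc q i j = 1 / complex_of_real ((q i + q j) / 2)"

lemma Cst_prod:
  assumes st: "s \<noteq> t" "s < T" "t < T" and len: "length x = T" "length y = T"
  shows "Cst T (Cop d e q) s t x y = (\<Sum>i<d. \<Sum>j<d. Wc q i j * (\<Prod>r<T. Lop e s t i j r (x!r) (y!r)))"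
proof -
  have fin: "finite ({..<T} - {s} - {t})" by auto
  have split: "(\<Prod>r<T. f r) = f s * f t * (\<Prod>r\<in>{..<T} - {s} - {t}. f r)" for f :: "nat \<Rightarrow> complex"
  proof -
    have "(\<Prod>r<T. f r) = f s * (\<Prod>r\<in>{..<T} - {s}. f r)" using st by (simp add: prod.remove)
    also have "(\<Prod>r\<in>{..<T} - {s}. f r) = f t * (\<Prod>r\<in>{..<T} - {s} - {t}. f r)" using st by (subst prod.remove[of _ t]) auto
    finally show ?thesis by (simp add: mult.assoc)
  qed
  have rest: "(\<Prod>r\<in>{..<T} - {s} - {t}. Lop e s t i j r (x!r) (y!r)) = (if \<forall>r<T. r \<noteq> s \<and> r \<noteq> t \<longrightarrow> x!r = y!r then 1 else 0)" for i j
  proof -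
    have "(\<Prod>r\<in>{..<T} - {s} - {t}. Lop e s t i j r (x!r) (y!r)) = (\<Prod>r\<in>{..<T} - {s} - {t}. if x!r = y!r then 1 else 0)"
      by (intro prod.cong) (auto simp: Lop_def idop_def)
    also have "\<dots> = (if \<forall>r<T. r \<noteq> s \<and> r \<noteq> t \<longrightarrow> x!r = y!r then 1 else 0)"
      by (subst prod_ind[OF fin]) auto
    finally show ?thesis .
  qed
  show ?thesis
    unfolding Cst_def Cop_def
    apply (subst split)
    apply (simp only: rest)
    using st by (auto simp: Lop_def Eop_def Wc_def sum_distrib_left mult_ac intro!: sum.cong)
qed

definition Sset :: "nat \<Rightarrow> nat \<Rightarrow> nat \<Rightarrow> (nat \<times> nat \<times> nat) set" where
  "Sset T d t = ({..<T} - {t}) \<times> {..<d} \<times> {..<d}"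

definition cf :: "nat \<Rightarrow> (nat \<Rightarrow> real) \<Rightarrow> nat \<times> nat \<times> nat \<Rightarrow> complex" where
  "cf T q = (\<lambda>(s,i,j). 1 / (of_nat T)\<^sup>2 * Wc q i j)"

definition Pk :: "(nat \<Rightarrow> nat \<Rightarrow> complex) \<Rightarrow> nat \<Rightarrow> nat \<times> nat \<times> nat \<Rightarrow> nat \<Rightarrow> nat \<times> nat \<Rightarrow> nat \<times> nat \<Rightarrow> complex" where
  "Pk e t = (\<lambda>(s,i,j) r. tens (Lop e s t i j r) idop)"

lemma MI_prodk:
  assumes "t < T"
  shows "eqJ (idx d T \<times> idx d T) (tens (Mop T (Cop d e q) t) idop)
           (\<lambda>X Y. \<Sum>a\<in>Sset T d t. cf T q a * prodk T (Pk e t a) X Y)"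
  unfolding eqJ_def
proof (intro ballI)
  fix X Y assume X: "X \<in> idx d T \<times> idx d T" and Y: "Y \<in> idx d T \<times> idx d T"
  obtain x x' y y' where XY: "X = (x,x')" "Y = (y,y')" by (cases X, cases Y)
  have len: "length x = T" "length x' = T" "length y = T" "length y' = T" using X Y XY by (auto simp: idx_def)
  have pk: "prodk T (Pk e t (s,i,j)) X Y = (\<Prod>r<T. Lop e s t i j r (x!r) (y!r)) * idop x' y'" for s i j
    unfolding XY prodk_def Pk_def tens_def using prod_idop[OF len(2,4)]
    by (simp add: prod.distrib)
  have "(\<Sum>a\<in>Sset T d t. cf T q a * prodk T (Pk e t a) X Y)
     = (\<Sum>s\<in>{..<T} - {t}. \<Sum>i<d. \<Sum>j<d. 1 / (of_nat T)\<^sup>2 * Wc q i j * ((\<Prod>r<T. Lop e s t i j r (x!r) (y!r)) * idop x' y'))"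
    unfolding Sset_def by (simp add: sum.cartesian_product' cf_def pk)
  also have "\<dots> = tens (Mop T (Cop d e q) t) idop X Y"
    unfolding XY tens_def Mop_def using assms len
    by (auto simp: Cst_prod sum_distrib_left sum_distrib_right sum_divide_distrib mult_ac intro!: sum.cong)
  finally show "tens (Mop T (Cop d e q) t) idop X Y = (\<Sum>a\<in>Sset T d t. cf T q a * prodk T (Pk e t a) X Y)" by simp
qed

lemma sum_if_const: "(\<Sum>x\<in>A. if P then f x else 0) = (if P then sum f A else 0)" by auto
lemma t1: "(\<Sum>c<(d::nat). \<Sum>c'<d. X b c * idop b' c' * Y c a * idop c' a') = (if b' = a' \<and> a' < d then \<Sum>c<d. X b c * Y c a else (0::complex))"
proof -
  have "(\<Sum>c<d. \<Sum>c'<d. X b c * idop b' c' * Y c a * idop c' a') = (\<Sum>c<d. \<Sum>c'<d. if c' = a' then (if b' = a' then X b c * Y c a else 0) else 0)"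
    by (intro sum.cong refl) (auto simp: idop_def)
  also have "\<dots> = (if b' = a' \<and> a' < d then \<Sum>c<d. X b c * Y c a else (0::complex))" by (simp add: sum_if_const)
  finally show ?thesis .
qed
lemma t2: "(\<Sum>c<(d::nat). \<Sum>c'<d. X b c' * idop b' c * Y c a' * idop c' a) = (if a < d \<and> b' < d then X b a * Y b' a' else (0::complex))"
proof -
  have e: "X b c' * idop b' c * Y c a' * idop c' a = (if c = b' then (if c' = a then X b a * Y b' a' else 0) else 0)" for c c'
    by (auto simp: idop_def)
  show ?thesis by (simp only: e) (simp add: sum_if_const)
qed

definition tr1 :: "nat \<Rightarrow> (nat \<Rightarrow> nat \<Rightarrow> complex) \<Rightarrow> (nat \<Rightarrow> nat \<Rightarrow> complex) \<Rightarrow> complex" where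
  "tr1 d \<rho> X = (\<Sum>a<d. \<Sum>b<d. \<rho> a b * X b a)"

definition tr3 :: "nat \<Rightarrow> (nat \<Rightarrow> nat \<Rightarrow> complex) \<Rightarrow> (nat \<Rightarrow> nat \<Rightarrow> complex) \<Rightarrow> (nat \<Rightarrow> nat \<Rightarrow> complex) \<Rightarrow> complex" where
  "tr3 d \<rho> X Y = (\<Sum>a<d. \<Sum>b<d. \<Sum>c<d. \<rho> a b * X b c * Y c a)"

lemma mmul_idop: "finite I \<Longrightarrow> mmul I A idop = (\<lambda>x y. if y \<in> I then A x y else 0)"
  unfolding mmul_def idop_def by (auto intro!: ext simp: if_distrib cong: if_cong)

lemma mmul_swp: "mmul (D2 (d::nat)) A swp = (\<lambda>x y. if (snd y, fst y) \<in> D2 d then A x (snd y, fst y) else 0)"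
proof (intro ext)
  fix x y :: "nat \<times> nat"
  have "mmul (D2 (d::nat)) A swp x y = (\<Sum>z\<in>D2 d. if z = (snd y, fst y) then A x z else 0)"
    unfolding mmul_def swp_def by (intro sum.cong) (auto simp: split_beta)
  thus "mmul (D2 d) A swp x y = (if (snd y, fst y) \<in> D2 d then A x (snd y, fst y) else 0)"
    by (simp add: sum.delta')
qed

lemma local_id:
  "expect (D2 d) (tens \<rho> \<rho>) (mmul (D2 d) (mmul (D2 d) (mmul (D2 d) (tens X idop) idop) (tens Y idop)) idop)
   = tr3 d \<rho> X Y * (\<Sum>a<d. \<rho> a a)"
proof -
  have "expect (D2 d) (tens \<rho> \<rho>) (mmul (D2 d) (mmul (D2 d) (mmul (D2 d) (tens X idop) idop) (tens Y idop)) idop)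
    = (\<Sum>a<d. \<Sum>a'<d. \<Sum>b<d. \<Sum>b'<d. \<rho> a b * \<rho> a' b' * (\<Sum>c<d. \<Sum>c'<d. X b c * idop b' c' * Y c a * idop c' a'))"
    unfolding expect_def mtrace_def mmul_idop[OF finite_SigmaI[OF finite_lessThan finite_lessThan]]
    by (simp add: mmul_def tens_def sum.cartesian_product' sum_distrib_left mult.assoc)
  also have "\<dots> = (\<Sum>a<d. \<Sum>a'<d. \<Sum>b<d. \<rho> a b * \<rho> a' a' * (\<Sum>c<d. X b c * Y c a))"
    by (simp add: t1 sum_if_const if_distrib cong: if_cong)
  also have "\<dots> = (\<Sum>a<d. \<Sum>a'<d. (\<Sum>b<d. \<rho> a b * (\<Sum>c<d. X b c * Y c a)) * \<rho> a' a')"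
    by (simp add: sum_distrib_right sum_distrib_left mult_ac)
  also have "\<dots> = (\<Sum>a<d. \<Sum>b<d. \<rho> a b * (\<Sum>c<d. X b c * Y c a)) * (\<Sum>a<d. \<rho> a a)"
    by (simp add: sum_product)
  also have "\<dots> = tr3 d \<rho> X Y * (\<Sum>a<d. \<rho> a a)"
    unfolding tr3_def by (simp add: sum_distrib_left mult.assoc)
  finally show ?thesis .
qed

lemma local_swp:
  "expect (D2 d) (tens \<rho> \<rho>) (mmul (D2 d) (mmul (D2 d) (mmul (D2 d) (tens X idop) swp) (tens Y idop)) swp)
   = tr1 d \<rho> X * tr1 d \<rho> Y"
proof -
  have "expect (D2 d) (tens \<rho> \<rho>) (mmul (D2 d) (mmul (D2 d) (mmul (D2 d) (tens X idop) swp) (tens Y idop)) swp)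
    = (\<Sum>a<d. \<Sum>a'<d. \<Sum>b<d. \<Sum>b'<d. \<rho> a b * \<rho> a' b' * (\<Sum>c<d. \<Sum>c'<d. X b c' * idop b' c * Y c a' * idop c' a))"
    unfolding expect_def mtrace_def mmul_swp
    by (simp add: mmul_def tens_def sum.cartesian_product' sum_distrib_left mult.assoc)
  also have "\<dots> = (\<Sum>a<d. \<Sum>a'<d. \<Sum>b<d. \<Sum>b'<d. \<rho> a b * \<rho> a' b' * (X b a * Y b' a'))"
    by (simp add: t2 sum_if_const if_distrib cong: if_cong)
  also have "\<dots> = tr1 d \<rho> X * tr1 d \<rho> Y"
    unfolding tr1_def by (simp add: sum_product mult_ac)
  finally show ?thesis .
qed


lemma eqJ_refl: "eqJ I A A" by (simp add: eqJ_def)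

definition Phi :: "nat \<Rightarrow> (nat \<Rightarrow> nat \<Rightarrow> complex) \<Rightarrow> nat \<Rightarrow> (nat \<Rightarrow> nat \<Rightarrow> nat \<Rightarrow> complex) \<Rightarrow> nat \<Rightarrow> nat \<times> nat \<times> nat \<Rightarrow> nat \<times> nat \<times> nat \<Rightarrow> complex" where
  "Phi d e t \<rho>s r a b = expect (D2 d) (tens (\<rho>s r) (\<rho>s r))
     (mmul (D2 d) (mmul (D2 d) (mmul (D2 d) (Pk e t a r) (Fl t r)) (Pk e t b r)) (Fl t r))"

lemma expand:
  assumes "t < T"
  shows "expect (idx d T \<times> idx d T) (tens (tensor_states T \<rho>s) (tensor_states T \<rho>s))
     (mmul (idx d T \<times> idx d T) (mmul (idx d T \<times> idx d T) (mmul (idx d T \<times> idx d T)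
        (tens (Mop T (Cop d e q) t) idop) (Fswap t)) (tens (Mop T (Cop d e q) t) idop)) (Fswap t))
   = (\<Sum>a\<in>Sset T d t. cf T q a * (\<Sum>b\<in>Sset T d t. cf T q b * (\<Prod>r<T. Phi d e t \<rho>s r a b)))"
proof -
  let ?J = "idx d T \<times> idx d T"
  let ?MS = "\<lambda>X Y. \<Sum>a\<in>Sset T d t. cf T q a * prodk T (Pk e t a) X Y"
  have M: "eqJ ?J (tens (Mop T (Cop d e q) t) idop) ?MS" by (rule MI_prodk[OF assms])
  have F: "eqJ ?J (Fswap t) (prodk T (Fl t))" by (rule Fswap_prodk[OF assms])
  have "expect ?J (tens (tensor_states T \<rho>s) (tensor_states T \<rho>s))
     (mmul ?J (mmul ?J (mmul ?J (tens (Mop T (Cop d e q) t) idop) (Fswap t)) (tens (Mop T (Cop d e q) t) idop)) (Fswap t))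
     = expect ?J (prodk T (\<lambda>r. tens (\<rho>s r) (\<rho>s r))) (mmul ?J (mmul ?J (mmul ?J ?MS (prodk T (Fl t))) ?MS) (prodk T (Fl t)))"
    unfolding tens_prodk
    by (intro eqJ_expect eqJ_refl eqJ_mmul M F)
  also have "\<dots> = (\<Sum>a\<in>Sset T d t. cf T q a * (\<Sum>b\<in>Sset T d t. cf T q b * (\<Prod>r<T. Phi d e t \<rho>s r a b)))"
    by (simp add: mmul_sum_left mmul_sum_right expect_sum_right mmul_prodk expect_prodk Phi_def)
  finally show ?thesis .
qed


definition pr :: "nat \<Rightarrow> (nat \<Rightarrow> nat \<Rightarrow> complex) \<Rightarrow> (nat \<Rightarrow> nat \<Rightarrow> complex) \<Rightarrow> nat \<Rightarrow> nat \<Rightarrow> complex" where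
  "pr d e \<rho> i j = (\<Sum>a<d. \<Sum>b<d. cnj (e i a) * \<rho> a b * e j b)"

lemma idop_mult: "x * idop a b = (if a = b then x else (0::complex))" "idop a b * x = (if a = b then x else (0::complex))"
  "(if P then y else 0) * x = (if P then y * x else (0::complex))"
  by (auto simp: idop_def)

lemma tr1_E: "tr1 d \<rho> (Eop e i j) = pr d e \<rho> j i"
  unfolding tr1_def pr_def Eop_def by (simp add: mult_ac)

lemma tr3_E_id: "tr3 d \<rho> (Eop e i j) idop = pr d e \<rho> j i"
proof -
  have "tr3 d \<rho> (Eop e i j) idop = tr1 d \<rho> (Eop e i j)"
    unfolding tr3_def tr1_def by (simp add: idop_mult)
  thus ?thesis by (simp add: tr1_E)
qed

lemma tr3_id_E: "tr3 d \<rho> idop (Eop e i j) = pr d e \<rho> j i"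
proof -
  have "tr3 d \<rho> idop (Eop e i j) = tr1 d \<rho> (Eop e i j)"
    unfolding tr3_def tr1_def by (simp add: idop_mult)
  thus ?thesis by (simp add: tr1_E)
qed

lemma tr3_id_id: "tr3 d \<rho> idop idop = (\<Sum>a<d. \<rho> a a)"
  unfolding tr3_def by (simp add: idop_mult)

lemma tr3_E_E:
  assumes "orthonormal_basis d e" "i < d" "l < d"
  shows "tr3 d \<rho> (Eop e j i) (Eop e l k) = (if i = l then pr d e \<rho> k j else 0)"
proof -
  have "tr3 d \<rho> (Eop e j i) (Eop e l k) = (\<Sum>a<d. \<Sum>b<d. \<rho> a b * e j b * cnj (e k a) * (\<Sum>c<d. cnj (e i c) * e l c))"
    unfolding tr3_def Eop_def by (simp add: sum_distrib_left mult_ac)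
  also have "\<dots> = (if i = l then pr d e \<rho> k j else 0)"
    using assms unfolding orthonormal_basis_def pr_def by (simp add: mult_ac)
  finally show ?thesis .
qed


lemma Phi_eval:
  assumes onb: "orthonormal_basis d e" and r: "r < T" and st: "s \<noteq> t" "s' \<noteq> t"
    and ijkl: "i < d" "j < d" "k < d" "l < d" and tr: "(\<Sum>a<d. \<rho>s r a a) = 1"
  shows "Phi d e t \<rho>s r (s,i,j) (s',k,l) =
    (if r = t then pr d e (\<rho>s r) j i * pr d e (\<rho>s r) l k
     else if r = s \<and> r = s' then (if i = l then pr d e (\<rho>s r) k j else 0)
     else if r = s then pr d e (\<rho>s r) i j else if r = s' then pr d e (\<rho>s r) k l else 1)"
proof (cases "r = t")
  case True
  thus ?thesis using st unfolding Phi_def Pk_def Fl_def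
    by (simp add: local_swp Lop_def tr1_E)
next
  case False
  have "Phi d e t \<rho>s r (s,i,j) (s',k,l) = tr3 d (\<rho>s r) (Lop e s t i j r) (Lop e s' t k l r)"
    using False tr unfolding Phi_def Pk_def Fl_def by (simp add: local_id)
  thus ?thesis using False onb ijkl
    by (simp add: Lop_def tr3_E_E tr3_E_id tr3_id_E tr3_id_id tr)
qed

lemma prod_Phi:
  assumes onb: "orthonormal_basis d e" and t: "t < T" and s: "s < T" "s' < T" and st: "s \<noteq> t" "s' \<noteq> t"
    and ijkl: "i < d" "j < d" "k < d" "l < d" and tr: "\<forall>r<T. (\<Sum>a<d. \<rho>s r a a) = 1"
  shows "(\<Prod>r<T. Phi d e t \<rho>s r (s,i,j) (s',k,l)) =
     pr d e (\<rho>s t) j i * pr d e (\<rho>s t) l k *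
     (if s = s' then (if i = l then pr d e (\<rho>s s) k j else 0) else pr d e (\<rho>s s) i j * pr d e (\<rho>s s') k l)"
proof -
  define f where "f r = (if r = t then pr d e (\<rho>s r) j i * pr d e (\<rho>s r) l k
     else if r = s \<and> r = s' then (if i = l then pr d e (\<rho>s r) k j else 0)
     else if r = s then pr d e (\<rho>s r) i j else if r = s' then pr d e (\<rho>s r) k l else 1)" for r
  have "(\<Prod>r<T. Phi d e t \<rho>s r (s,i,j) (s',k,l)) = (\<Prod>r<T. f r)"
    unfolding f_def using assms by (intro prod.cong refl Phi_eval) auto
  also have "\<dots> = f t * (\<Prod>r\<in>{..<T} - {t}. f r)" using t by (simp add: prod.remove)
  also have "(\<Prod>r\<in>{..<T} - {t}. f r) = (if s = s' then (if i = l then pr d e (\<rho>s s) k j else 0) else pr d e (\<rho>s s) i j * pr d e (\<rho>s s') k l)"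
  proof (cases "s = s'")
    case True
    have "(\<Prod>r\<in>{..<T} - {t}. f r) = f s * (\<Prod>r\<in>{..<T} - {t} - {s}. f r)"
      using s st by (subst prod.remove[of _ s]) auto
    also have "(\<Prod>r\<in>{..<T} - {t} - {s}. f r) = 1" using True by (intro prod.neutral) (auto simp: f_def)
    finally show ?thesis using True st by (simp add: f_def)
  next
    case False
    have "(\<Prod>r\<in>{..<T} - {t}. f r) = f s * (\<Prod>r\<in>{..<T} - {t} - {s}. f r)"
      using s st by (subst prod.remove[of _ s]) auto
    also have "(\<Prod>r\<in>{..<T} - {t} - {s}. f r) = f s' * (\<Prod>r\<in>{..<T} - {t} - {s} - {s'}. f r)"
      using s st False by (subst prod.remove[of _ s']) auto
    also have "(\<Prod>r\<in>{..<T} - {t} - {s} - {s'}. f r) = 1" by (intro prod.neutral) (auto simp: f_def)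
    finally show ?thesis using False st by (simp add: f_def)
  qed
  finally show ?thesis by (simp add: f_def)
qed


definition gc :: "nat \<Rightarrow> (nat \<Rightarrow> nat \<Rightarrow> complex) \<Rightarrow> (nat \<Rightarrow> real) \<Rightarrow> (nat \<Rightarrow> nat \<Rightarrow> nat \<Rightarrow> complex) \<Rightarrow> nat \<Rightarrow> nat \<Rightarrow> complex" where
  "gc d e q \<rho>s s t = (\<Sum>i<d. \<Sum>j<d. Wc q i j * pr d e (\<rho>s t) j i * pr d e (\<rho>s s) i j)"

definition hc :: "nat \<Rightarrow> (nat \<Rightarrow> nat \<Rightarrow> complex) \<Rightarrow> (nat \<Rightarrow> real) \<Rightarrow> (nat \<Rightarrow> nat \<Rightarrow> nat \<Rightarrow> complex) \<Rightarrow> nat \<Rightarrow> nat \<Rightarrow> complex" where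
  "hc d e q \<rho>s s t = (\<Sum>i<d. \<Sum>j<d. \<Sum>k<d. Wc q i j * Wc q k i * pr d e (\<rho>s t) j i * pr d e (\<rho>s t) i k * pr d e (\<rho>s s) k j)"

lemma swap3: "(\<Sum>i\<in>A. \<Sum>j\<in>B. \<Sum>s\<in>C. f i j s) = (\<Sum>s\<in>C. \<Sum>i\<in>A. \<Sum>j\<in>B. (f i j s :: complex))"
  by (simp add: sum.swap[of _ C])

lemma inner_eq:
  "(\<Sum>i<d. \<Sum>j<d. \<Sum>k<d. \<Sum>l<d. Wc q i j * Wc q k l * (pr d e (\<rho>s t) j i * pr d e (\<rho>s t) l k *
     (if s = s' then (if i = l then pr d e (\<rho>s s) k j else 0) else pr d e (\<rho>s s) i j * pr d e (\<rho>s s') k l)))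
   = (if s = s' then hc d e q \<rho>s s t else gc d e q \<rho>s s t * gc d e q \<rho>s s' t)"
proof (cases "s = s'")
  case True
  have "(\<Sum>i<d. \<Sum>j<d. \<Sum>k<d. \<Sum>l<d. Wc q i j * Wc q k l * (pr d e (\<rho>s t) j i * pr d e (\<rho>s t) l k *
     (if i = l then pr d e (\<rho>s s) k j else 0)))
     = (\<Sum>i<d. \<Sum>j<d. \<Sum>k<d. \<Sum>l<d. if i = l then Wc q i j * Wc q k i * pr d e (\<rho>s t) j i * pr d e (\<rho>s t) i k * pr d e (\<rho>s s) k j else 0)"
    by (intro sum.cong refl) auto
  also have "\<dots> = hc d e q \<rho>s s t" unfolding hc_def by simp
  finally show ?thesis using True by simp
next
  case False
  have "gc d e q \<rho>s s t * gc d e q \<rho>s s' t = (\<Sum>i<d. \<Sum>j<d. \<Sum>k<d. \<Sum>l<d. Wc q i j * Wc q k l * (pr d e (\<rho>s t) j i * pr d e (\<rho>s t) l k *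
     (pr d e (\<rho>s s) i j * pr d e (\<rho>s s') k l)))"
  proof -
    have "(\<Sum>i<d. \<Sum>j<d. \<Sum>k<d. \<Sum>l<d. Wc q i j * Wc q k l * (pr d e (\<rho>s t) j i * pr d e (\<rho>s t) l k *
     (pr d e (\<rho>s s) i j * pr d e (\<rho>s s') k l)))
      = (\<Sum>i<d. \<Sum>j<d. (Wc q i j * pr d e (\<rho>s t) j i * pr d e (\<rho>s s) i j) * gc d e q \<rho>s s' t)"
      unfolding gc_def by (simp add: sum_distrib_left mult_ac)
    also have "\<dots> = gc d e q \<rho>s s t * gc d e q \<rho>s s' t"
      unfolding gc_def[of d e q \<rho>s s t] by (simp add: sum_distrib_right)
    finally show ?thesis by simp
  qed
  thus ?thesis using False by simp
qed

lemma LHS_t_eq: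
  assumes onb: "orthonormal_basis d e" and t: "t < T" and tr: "\<forall>r<T. (\<Sum>a<d. \<rho>s r a a) = 1"
  shows "expect (idx d T \<times> idx d T) (tens (tensor_states T \<rho>s) (tensor_states T \<rho>s))
     (mmul (idx d T \<times> idx d T) (mmul (idx d T \<times> idx d T) (mmul (idx d T \<times> idx d T)
        (tens (Mop T (Cop d e q) t) idop) (Fswap t)) (tens (Mop T (Cop d e q) t) idop)) (Fswap t))
   = (1 / (of_nat T)^2)^2 * (\<Sum>s\<in>{..<T} - {t}. \<Sum>s'\<in>{..<T} - {t}.
        (if s = s' then hc d e q \<rho>s s t else gc d e q \<rho>s s t * gc d e q \<rho>s s' t))"
proof -
  let ?S = "{..<T} - {t}"
  let ?F = "\<lambda>s i j s' k l. pr d e (\<rho>s t) j i * pr d e (\<rho>s t) l k *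
     (if s = s' then (if i = l then pr d e (\<rho>s s) k j else 0) else pr d e (\<rho>s s) i j * pr d e (\<rho>s s') k l)"
  have "(\<Sum>a\<in>Sset T d t. cf T q a * (\<Sum>b\<in>Sset T d t. cf T q b * (\<Prod>r<T. Phi d e t \<rho>s r a b)))
     = (\<Sum>s\<in>?S. \<Sum>i<d. \<Sum>j<d. (1 / (of_nat T)^2 * Wc q i j) * (\<Sum>s'\<in>?S. \<Sum>k<d. \<Sum>l<d. (1 / (of_nat T)^2 * Wc q k l) * ?F s i j s' k l))"
    unfolding Sset_def sum.cartesian_product' cf_def
    using assms by (intro sum.cong refl) (simp add: prod_Phi)
  also have "\<dots> = (\<Sum>s\<in>?S. \<Sum>i<d. \<Sum>j<d. \<Sum>s'\<in>?S. (1 / (of_nat T)^2)^2 * (\<Sum>k<d. \<Sum>l<d. Wc q i j * Wc q k l * ?F s i j s' k l))"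
    by (simp add: sum_distrib_left power2_eq_square mult_ac)
  also have "\<dots> = (\<Sum>s\<in>?S. \<Sum>s'\<in>?S. \<Sum>i<d. \<Sum>j<d. (1 / (of_nat T)^2)^2 * (\<Sum>k<d. \<Sum>l<d. Wc q i j * Wc q k l * ?F s i j s' k l))"
    by (subst swap3) simp
  also have "\<dots> = (1 / (of_nat T)^2)^2 * (\<Sum>s\<in>?S. \<Sum>s'\<in>?S.
        (if s = s' then hc d e q \<rho>s s t else gc d e q \<rho>s s t * gc d e q \<rho>s s' t))"
    by (simp only: inner_eq[symmetric] sum_distrib_left)
  finally show ?thesis using expand[OF t] by simp
qed


definition Qf :: "nat \<Rightarrow> (nat \<Rightarrow> nat \<Rightarrow> complex) \<Rightarrow> (nat \<Rightarrow> nat \<Rightarrow> complex) \<Rightarrow> (nat \<Rightarrow> nat \<Rightarrow> complex) \<Rightarrow> complex" where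
  "Qf d A p r = (\<Sum>i<d. \<Sum>x<d. \<Sum>y<d. cnj (p i x) * A x y * r i y)"

lemma Qf_expand:
  "Qf d A (\<lambda>i x. r i x - c * p i x) (\<lambda>i x. r i x - c * p i x)
   = Qf d A r r - c * Qf d A r p - cnj c * Qf d A p r + c * cnj c * Qf d A p p"
proof -
  have e: "cnj (r i x - c * p i x) * A x y * (r i y - c * p i y) =
     cnj (r i x) * A x y * r i y - c * (cnj (r i x) * A x y * p i y) - cnj c * (cnj (p i x) * A x y * r i y)
     + c * cnj c * (cnj (p i x) * A x y * p i y)" for i x y
    by (simp add: algebra_simps)
  show ?thesis unfolding Qf_def e
    by (simp only: sum.distrib sum_subtractf sum_distrib_left[symmetric])
qed

lemma Qf_herm:
  assumes herm: "\<forall>x<d. \<forall>y<d. A y x = cnj (A x y)"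
  shows "Qf d A r p = cnj (Qf d A p r)"
proof -
  have "cnj (Qf d A p r) = (\<Sum>i<d. \<Sum>x<d. \<Sum>y<d. p i x * A y x * cnj (r i y))"
    unfolding Qf_def cnj_sum
  proof (intro sum.cong refl)
    fix i x y assume "x \<in> {..<d}" "y \<in> {..<d}"
    thus "cnj (cnj (p i x) * A x y * r i y) = p i x * A y x * cnj (r i y)" using herm[rule_format, of x y] by simp
  qed
  also have "\<dots> = (\<Sum>i<d. \<Sum>y<d. \<Sum>x<d. p i x * A y x * cnj (r i y))"
    by (rule sum.cong[OF refl], rule sum.swap)
  also have "\<dots> = Qf d A r p" unfolding Qf_def by (simp add: mult_ac)
  finally show ?thesis by simp
qed

lemma Qf_nonneg:
  assumes psd: "\<forall>v. 0 \<le> Re (\<Sum>x<d. \<Sum>y<d. cnj (v x) * A x y * v y)"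
  shows "0 \<le> Re (Qf d A r r)"
proof -
  have "Re (Qf d A r r) = (\<Sum>i<d. Re (\<Sum>x<d. \<Sum>y<d. cnj (r i x) * A x y * r i y))"
    unfolding Qf_def by (rule Re_sum)
  also have "\<dots> \<ge> 0" using psd by (intro sum_nonneg) blast
  finally show ?thesis .
qed

lemma Qf_CS:
  assumes herm: "\<forall>x<d. \<forall>y<d. A y x = cnj (A x y)"
    and psd: "\<forall>v. 0 \<le> Re (\<Sum>x<d. \<Sum>y<d. cnj (v x) * A x y * v y)"
    and pp: "Qf d A p p = 1"
  shows "(cmod (Qf d A p r))\<^sup>2 \<le> Re (Qf d A r r)"
proof -
  define c where "c = Qf d A p r"
  have "0 \<le> Re (Qf d A (\<lambda>i x. r i x - c * p i x) (\<lambda>i x. r i x - c * p i x))"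
    by (rule Qf_nonneg[OF psd])
  also have "Qf d A (\<lambda>i x. r i x - c * p i x) (\<lambda>i x. r i x - c * p i x) = Qf d A r r - c * cnj c"
    unfolding Qf_expand Qf_herm[OF herm, of r p] pp c_def by simp
  finally show ?thesis unfolding c_def by (simp add: complex_mult_cnj cmod_def power2_eq_square[symmetric])
qed


lemma Wc_real: "Wc q i j = complex_of_real (2 / (q i + q j))"
  unfolding Wc_def by (simp add: field_simps)

lemma Wc_sym: "Wc q i j = Wc q j i" unfolding Wc_def by (simp add: add.commute)

lemma Wc_cnj: "cnj (Wc q i j) = Wc q i j" unfolding Wc_real by simp

lemma herm_of_state: "is_state d \<rho> \<Longrightarrow> a < d \<Longrightarrow> b < d \<Longrightarrow> cnj (\<rho> a b) = \<rho> b a"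
  unfolding is_state_def by (metis complex_cnj_cnj)

lemma swap2in: "(\<Sum>x\<in>A. \<Sum>y\<in>B. \<Sum>a\<in>C. f x y a) = (\<Sum>x\<in>A. \<Sum>a\<in>C. \<Sum>y\<in>B. (f x y a :: complex))"
  by (rule sum.cong[OF refl], rule sum.swap)

lemma swap4: "(\<Sum>x\<in>A. \<Sum>y\<in>B. \<Sum>a\<in>C. \<Sum>b\<in>D. f x y a b) = (\<Sum>a\<in>C. \<Sum>b\<in>D. \<Sum>x\<in>A. \<Sum>y\<in>B. (f x y a b :: complex))"
proof -
  have "(\<Sum>x\<in>A. \<Sum>y\<in>B. \<Sum>a\<in>C. \<Sum>b\<in>D. f x y a b) = (\<Sum>x\<in>A. \<Sum>a\<in>C. \<Sum>y\<in>B. \<Sum>b\<in>D. f x y a b)"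
    by (rule swap2in)
  also have "\<dots> = (\<Sum>x\<in>A. \<Sum>a\<in>C. \<Sum>b\<in>D. \<Sum>y\<in>B. f x y a b)"
    by (rule sum.cong[OF refl], rule swap2in)
  also have "\<dots> = (\<Sum>a\<in>C. \<Sum>x\<in>A. \<Sum>b\<in>D. \<Sum>y\<in>B. f x y a b)"
    by (rule sum.swap)
  also have "\<dots> = (\<Sum>a\<in>C. \<Sum>b\<in>D. \<Sum>x\<in>A. \<Sum>y\<in>B. f x y a b)"
    by (rule swap2in)
  finally show ?thesis .
qed

lemma pr_herm:
  assumes "is_state d \<rho>"
  shows "pr d e \<rho> y x = cnj (pr d e \<rho> x y)"
proof -
  have "cnj (pr d e \<rho> x y) = (\<Sum>a<d. \<Sum>b<d. e x a * \<rho> b a * cnj (e y b))"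
    unfolding pr_def cnj_sum
  proof (intro sum.cong refl)
    fix a b assume "a \<in> {..<d}" "b \<in> {..<d}"
    thus "cnj (cnj (e x a) * \<rho> a b * e y b) = e x a * \<rho> b a * cnj (e y b)"
      using herm_of_state[OF assms, of a b] by simp
  qed
  also have "\<dots> = (\<Sum>b<d. \<Sum>a<d. e x a * \<rho> b a * cnj (e y b))" by (rule sum.swap)
  also have "\<dots> = pr d e \<rho> y x" unfolding pr_def by (simp add: mult_ac)
  finally show ?thesis by simp
qed

lemma pr_psd:
  assumes "is_state d \<rho>"
  shows "0 \<le> Re (\<Sum>x<d. \<Sum>y<d. cnj (v x) * pr d e \<rho> x y * v y)"
proof -
  define w where "w a = (\<Sum>x<d. e x a * v x)" for a
  have "(\<Sum>x<d. \<Sum>y<d. cnj (v x) * pr d e \<rho> x y * v y) = (\<Sum>x<d. \<Sum>y<d. \<Sum>a<d. \<Sum>b<d. cnj (v x) * cnj (e x a) * \<rho> a b * e y b * v y)"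
    unfolding pr_def by (simp add: sum_distrib_left sum_distrib_right mult_ac)
  also have "\<dots> = (\<Sum>a<d. \<Sum>b<d. \<Sum>x<d. \<Sum>y<d. cnj (v x) * cnj (e x a) * \<rho> a b * e y b * v y)"
    by (rule swap4)
  also have "\<dots> = (\<Sum>a<d. \<Sum>b<d. cnj (w a) * \<rho> a b * w b)"
    unfolding w_def by (simp add: sum_distrib_left sum_distrib_right mult_ac)
  moreover have "\<forall>w. 0 \<le> Re (\<Sum>a<d. \<Sum>b<d. cnj (w a) * \<rho> a b * w b)"
    using assms unfolding is_state_def by blast
  ultimately show ?thesis by simp
qed

lemma pr_trace:
  assumes onb: "orthonormal_basis d e" and st: "(\<Sum>a<d. \<rho> a a) = 1"
  shows "(\<Sum>i<d. pr d e \<rho> i i) = 1"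
proof -
  have "(\<Sum>i<d. pr d e \<rho> i i) = (\<Sum>a<d. \<Sum>i<d. \<Sum>b<d. cnj (e i a) * \<rho> a b * e i b)"
    unfolding pr_def by (rule sum.swap)
  also have "\<dots> = (\<Sum>a<d. \<Sum>b<d. \<Sum>i<d. cnj (e i a) * \<rho> a b * e i b)"
    by (rule sum.cong[OF refl], rule sum.swap)
  also have "\<dots> = (\<Sum>a<d. \<Sum>b<d. \<rho> a b * (\<Sum>i<d. e i b * cnj (e i a)))"
    by (simp add: sum_distrib_left mult_ac)
  also have "\<dots> = (\<Sum>a<d. \<Sum>b<d. if b = a then \<rho> a b else 0)"
    by (intro sum.cong refl) (simp add: onb_complete[OF onb])
  also have "\<dots> = 1" using st by simp
  finally show ?thesis .
qed


lemma pr_cnj: "is_state d \<rho> \<Longrightarrow> cnj (pr d e \<rho> x y) = pr d e \<rho> y x"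
  by (rule pr_herm[symmetric])

lemma gc_Q:
  "gc d e q \<rho>s s t = Qf d (pr d e (\<rho>s s)) (\<lambda>i x. idop x i) (\<lambda>i y. Wc q y i * pr d e (\<rho>s t) y i)"
proof -
  have "Qf d (pr d e (\<rho>s s)) (\<lambda>i x. idop x i) (\<lambda>i y. Wc q y i * pr d e (\<rho>s t) y i)
     = (\<Sum>i<d. \<Sum>x<d. if x = i then (\<Sum>y<d. pr d e (\<rho>s s) x y * (Wc q y i * pr d e (\<rho>s t) y i)) else 0)"
    unfolding Qf_def idop_def by (intro sum.cong refl) (simp add: sum_distrib_left)
  also have "\<dots> = gc d e q \<rho>s s t"
    unfolding gc_def by (simp add: Wc_sym[of q _ ] mult_ac)
  finally show ?thesis by simp
qed

lemma hc_Q: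
  assumes "is_state d (\<rho>s t)"
  shows "hc d e q \<rho>s s t = Qf d (pr d e (\<rho>s s)) (\<lambda>i y. Wc q y i * pr d e (\<rho>s t) y i) (\<lambda>i y. Wc q y i * pr d e (\<rho>s t) y i)"
proof -
  have "Qf d (pr d e (\<rho>s s)) (\<lambda>i y. Wc q y i * pr d e (\<rho>s t) y i) (\<lambda>i y. Wc q y i * pr d e (\<rho>s t) y i)
    = (\<Sum>i<d. \<Sum>x<d. \<Sum>y<d. Wc q x i * pr d e (\<rho>s t) i x * pr d e (\<rho>s s) x y * (Wc q y i * pr d e (\<rho>s t) y i))"
    unfolding Qf_def by (simp add: Wc_cnj pr_cnj[OF assms])
  also have "\<dots> = (\<Sum>i<d. \<Sum>y<d. \<Sum>x<d. Wc q x i * pr d e (\<rho>s t) i x * pr d e (\<rho>s s) x y * (Wc q y i * pr d e (\<rho>s t) y i))"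
    by (rule sum.cong[OF refl], rule sum.swap)
  also have "\<dots> = hc d e q \<rho>s s t"
    unfolding hc_def by (intro sum.cong refl) (simp add: Wc_sym[of q _ ] mult_ac)
  finally show ?thesis by simp
qed

lemma gc_real:
  assumes "is_state d (\<rho>s s)" "is_state d (\<rho>s t)"
  shows "Im (gc d e q \<rho>s s t) = 0"
proof -
  have "cnj (gc d e q \<rho>s s t) = (\<Sum>i<d. \<Sum>j<d. Wc q i j * pr d e (\<rho>s t) i j * pr d e (\<rho>s s) j i)"
    unfolding gc_def cnj_sum by (simp add: Wc_cnj pr_cnj[OF assms(1)] pr_cnj[OF assms(2)])
  also have "\<dots> = (\<Sum>j<d. \<Sum>i<d. Wc q i j * pr d e (\<rho>s t) i j * pr d e (\<rho>s s) j i)"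
    by (rule sum.swap)
  also have "\<dots> = gc d e q \<rho>s s t"
    unfolding gc_def by (intro sum.cong refl) (simp add: Wc_sym[of q _ ] mult_ac)
  finally have "cnj (gc d e q \<rho>s s t) = gc d e q \<rho>s s t" .
  thus ?thesis by (metis Reals_cnj_iff complex_is_Real_iff)
qed


lemma state_trace: "is_state d \<rho> \<Longrightarrow> (\<Sum>a<d. \<rho> a a) = 1"
  unfolding is_state_def by blast

lemma Qf_pp: "Qf d A (\<lambda>i x. idop x i) (\<lambda>i x. idop x i) = (\<Sum>i<d. A i i)"
proof -
  have c: "cnj (idop a b) = (idop a b :: complex)" for a b :: nat by (simp add: idop_def)
  show ?thesis unfolding Qf_def c by (simp add: idop_mult)
qed

lemma term_ineq:
  assumes onb: "orthonormal_basis d e" and ss: "is_state d (\<rho>s s)" and ss': "is_state d (\<rho>s s')" and st: "is_state d (\<rho>s t)"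
  shows "Re (gc d e q \<rho>s s t) * Re (gc d e q \<rho>s s' t) \<le> Re (if s = s' then hc d e q \<rho>s s t else gc d e q \<rho>s s t * gc d e q \<rho>s s' t)"
proof (cases "s = s'")
  case True
  let ?A = "pr d e (\<rho>s s)"
  have herm: "\<forall>x<d. \<forall>y<d. ?A y x = cnj (?A x y)" using pr_herm[OF ss] by blast
  have psd: "\<forall>v. 0 \<le> Re (\<Sum>x<d. \<Sum>y<d. cnj (v x) * ?A x y * v y)" using pr_psd[OF ss] by blast
  have pp: "Qf d ?A (\<lambda>i x. idop x i) (\<lambda>i x. idop x i) = 1"
    unfolding Qf_pp using pr_trace[where \<rho>="\<rho>s s", OF onb state_trace[OF ss]] .
  have "(cmod (gc d e q \<rho>s s t))\<^sup>2 \<le> Re (hc d e q \<rho>s s t)"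
    unfolding gc_Q hc_Q[where \<rho>s=\<rho>s and t=t, OF st] by (rule Qf_CS[OF herm psd pp])
  moreover have "(Re (gc d e q \<rho>s s t))\<^sup>2 \<le> (cmod (gc d e q \<rho>s s t))\<^sup>2"
    by (simp add: abs_Re_le_cmod power2_le_iff_abs_le)
  ultimately show ?thesis using True by (simp add: power2_eq_square)
next
  case False
  thus ?thesis using gc_real[OF ss st] gc_real[OF ss' st] by simp
qed

lemma LHS_t_ge:
  assumes onb: "orthonormal_basis d e" and t: "t < T" and states: "\<forall>r<T. is_state d (\<rho>s r)"
  shows "Re (expect (idx d T \<times> idx d T) (tens (tensor_states T \<rho>s) (tensor_states T \<rho>s))
     (mmul (idx d T \<times> idx d T) (mmul (idx d T \<times> idx d T) (mmul (idx d T \<times> idx d T)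
        (tens (Mop T (Cop d e q) t) idop) (Fswap t)) (tens (Mop T (Cop d e q) t) idop)) (Fswap t)))
   \<ge> (1 / real T ^ 2) ^ 2 * (\<Sum>s\<in>{..<T} - {t}. Re (gc d e q \<rho>s s t))\<^sup>2"
proof -
  have tr: "\<forall>r<T. (\<Sum>a<d. \<rho>s r a a) = 1" using states state_trace by blast
  have c: "(1 / (of_nat T)^2)^2 = complex_of_real ((1 / real T ^ 2) ^ 2)" by simp
  have "(\<Sum>s\<in>{..<T} - {t}. Re (gc d e q \<rho>s s t))\<^sup>2 = (\<Sum>s\<in>{..<T} - {t}. \<Sum>s'\<in>{..<T} - {t}. Re (gc d e q \<rho>s s t) * Re (gc d e q \<rho>s s' t))"
    by (simp add: power2_eq_square sum_product)
  also have "\<dots> \<le> (\<Sum>s\<in>{..<T} - {t}. \<Sum>s'\<in>{..<T} - {t}. Re (if s = s' then hc d e q \<rho>s s t else gc d e q \<rho>s s t * gc d e q \<rho>s s' t))"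
    using states t by (intro sum_mono term_ineq[OF onb]) auto
  finally have "(1 / real T ^ 2) ^ 2 * (\<Sum>s\<in>{..<T} - {t}. Re (gc d e q \<rho>s s t))\<^sup>2 \<le>
     (1 / real T ^ 2) ^ 2 * (\<Sum>s\<in>{..<T} - {t}. \<Sum>s'\<in>{..<T} - {t}. Re (if s = s' then hc d e q \<rho>s s t else gc d e q \<rho>s s t * gc d e q \<rho>s s' t))"
    by (intro mult_left_mono) auto
  thus ?thesis unfolding LHS_t_eq[where \<rho>s=\<rho>s and q=q, OF onb t tr] c by (simp add: Re_sum)
qed


lemma expect_C:
  "expect (D2 d) (tens \<rho> \<rho>) (Cop d e q) = (\<Sum>i<d. \<Sum>j<d. Wc q i j * pr d e \<rho> j i * pr d e \<rho> i j)"
proof -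
  have inner: "(\<Sum>a<d. \<Sum>c<d. \<Sum>a'<d. \<Sum>c'<d. Wc q i j * ((cnj (e i a) * \<rho> a c * e j c) * (cnj (e j a') * \<rho> a' c' * e i c')))
       = Wc q i j * pr d e \<rho> i j * pr d e \<rho> j i" for i j
  proof -
    have "Wc q i j * pr d e \<rho> i j * pr d e \<rho> j i = (\<Sum>a<d. \<Sum>c<d. Wc q i j * (cnj (e i a) * \<rho> a c * e j c) * pr d e \<rho> j i)"
      unfolding pr_def[of d e \<rho> i j] by (simp add: sum_distrib_left sum_distrib_right)
    also have "\<dots> = (\<Sum>a<d. \<Sum>c<d. \<Sum>a'<d. \<Sum>c'<d. Wc q i j * ((cnj (e i a) * \<rho> a c * e j c) * (cnj (e j a') * \<rho> a' c' * e i c')))"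
      unfolding pr_def[of d e \<rho> j i] by (simp add: sum_distrib_left mult.assoc)
    finally show ?thesis by simp
  qed
  have "expect (D2 d) (tens \<rho> \<rho>) (Cop d e q) =
    (\<Sum>a<d. \<Sum>a'<d. \<Sum>c<d. \<Sum>c'<d. \<Sum>i<d. \<Sum>j<d. Wc q i j * ((cnj (e i a) * \<rho> a c * e j c) * (cnj (e j a') * \<rho> a' c' * e i c')))"
  proof -
    have s1: "expect (D2 d) (tens \<rho> \<rho>) (Cop d e q) = (\<Sum>a<d. \<Sum>a'<d. \<Sum>c<d. \<Sum>c'<d. \<rho> a c * \<rho> a' c' * Cop d e q (c,c') (a,a'))"
      by (simp add: expect_def mtrace_def mmul_def tens_def sum.cartesian_product')
    have s2: "\<rho> a c * \<rho> a' c' * Cop d e q (c,c') (a,a') = (\<Sum>i<d. \<Sum>j<d. Wc q i j * ((cnj (e i a) * \<rho> a c * e j c) * (cnj (e j a') * \<rho> a' c' * e i c')))" for a a' c c'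
    proof -
      have "Cop d e q (c,c') (a,a') = (\<Sum>i<d. \<Sum>j<d. Wc q i j * (e j c * e i c' * cnj (e i a) * cnj (e j a')))"
        unfolding Cop_def Wc_def by (simp add: mult.commute)
      hence "\<rho> a c * \<rho> a' c' * Cop d e q (c,c') (a,a') = (\<Sum>i<d. \<Sum>j<d. \<rho> a c * \<rho> a' c' * (Wc q i j * (e j c * e i c' * cnj (e i a) * cnj (e j a'))))"
        by (simp add: sum_distrib_left)
      also have "\<dots> = (\<Sum>i<d. \<Sum>j<d. Wc q i j * ((cnj (e i a) * \<rho> a c * e j c) * (cnj (e j a') * \<rho> a' c' * e i c')))"
        by (intro sum.cong refl) (simp only: mult_ac)
      finally show ?thesis .
    qed
    show ?thesis unfolding s1 s2 ..
  qed
  also have "\<dots> = (\<Sum>a<d. \<Sum>c<d. \<Sum>a'<d. \<Sum>c'<d. \<Sum>i<d. \<Sum>j<d. Wc q i j * ((cnj (e i a) * \<rho> a c * e j c) * (cnj (e j a') * \<rho> a' c' * e i c')))"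
    by (rule swap2in)
  also have "\<dots> = (\<Sum>a<d. \<Sum>c<d. \<Sum>i<d. \<Sum>j<d. \<Sum>a'<d. \<Sum>c'<d. Wc q i j * ((cnj (e i a) * \<rho> a c * e j c) * (cnj (e j a') * \<rho> a' c' * e i c')))"
    by (rule sum.cong[OF refl], rule sum.cong[OF refl], rule swap4)
  also have "\<dots> = (\<Sum>i<d. \<Sum>j<d. \<Sum>a<d. \<Sum>c<d. \<Sum>a'<d. \<Sum>c'<d. Wc q i j * ((cnj (e i a) * \<rho> a c * e j c) * (cnj (e j a') * \<rho> a' c' * e i c')))"
    by (rule swap4)
  also have "\<dots> = (\<Sum>i<d. \<Sum>j<d. Wc q i j * pr d e \<rho> i j * pr d e \<rho> j i)"
    by (simp only: inner)
  finally show ?thesis by (simp add: mult_ac)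
qed


lemma pr_avg:
  "pr d e (\<lambda>a b. (1 / of_nat T) * (\<Sum>t<T. \<rho>s t a b)) i j = (1 / of_nat T) * (\<Sum>t<T. pr d e (\<rho>s t) i j)"
proof -
  have "pr d e (\<lambda>a b. (1 / of_nat T) * (\<Sum>t<T. \<rho>s t a b)) i j = (1 / of_nat T) * (\<Sum>a<d. \<Sum>b<d. \<Sum>t<T. cnj (e i a) * \<rho>s t a b * e j b)"
    unfolding pr_def by (simp add: sum_distrib_left sum_distrib_right mult_ac)
  also have "\<dots> = (1 / of_nat T) * (\<Sum>t<T. pr d e (\<rho>s t) i j)"
    unfolding pr_def by (subst swap3) simp
  finally show ?thesis .
qed

lemma sq_sum_le: "finite A \<Longrightarrow> (\<Sum>t\<in>A. x t)\<^sup>2 \<le> real (card A) * (\<Sum>t\<in>A. (x t)\<^sup>2)"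
proof -
  assume fin: "finite A"
  have "0 \<le> (\<Sum>s\<in>A. \<Sum>t\<in>A. (x s - x t)\<^sup>2)" by (intro sum_nonneg) auto
  also have "(\<Sum>s\<in>A. \<Sum>t\<in>A. (x s - x t)\<^sup>2) = (\<Sum>s\<in>A. \<Sum>t\<in>A. (x s)\<^sup>2 + (x t)\<^sup>2 - 2 * (x s * x t))"
    by (intro sum.cong refl) (simp add: power2_eq_square algebra_simps)
  also have "\<dots> = 2 * (real (card A) * (\<Sum>t\<in>A. (x t)\<^sup>2)) - 2 * (\<Sum>t\<in>A. x t)\<^sup>2"
  proof -
    have a: "(\<Sum>s\<in>A. \<Sum>t\<in>A. (x s)\<^sup>2) = real (card A) * (\<Sum>t\<in>A. (x t)\<^sup>2)" by (simp add: sum_distrib_left)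
    have b: "(\<Sum>s\<in>A. \<Sum>t\<in>A. (x t)\<^sup>2) = real (card A) * (\<Sum>t\<in>A. (x t)\<^sup>2)" by simp
    have c: "(\<Sum>s\<in>A. \<Sum>t\<in>A. x s * x t) = (\<Sum>t\<in>A. x t)\<^sup>2" by (simp add: power2_eq_square sum_product)
    have "(\<Sum>s\<in>A. \<Sum>t\<in>A. (x s)\<^sup>2 + (x t)\<^sup>2 - 2 * (x s * x t)) =
      (\<Sum>s\<in>A. \<Sum>t\<in>A. (x s)\<^sup>2) + (\<Sum>s\<in>A. \<Sum>t\<in>A. (x t)\<^sup>2) - 2 * (\<Sum>s\<in>A. \<Sum>t\<in>A. x s * x t)"
      by (simp only: sum.distrib sum_subtractf sum_distrib_left)
    thus ?thesis unfolding a b c by simp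
  qed
  finally show ?thesis by simp
qed

lemma real_ineq:
  fixes T m P :: real
  assumes "T \<ge> 1" "m \<ge> 1"
  shows "(T^2 * m - P)\<^sup>2 / T ^ 5 \<ge> 1 / T - 2 / T ^ 3 * P"
proof -
  have "(T^2 * m - P)\<^sup>2 - (T^4 - 2 * P * T^2) = (P - T^2 * (m - 1))\<^sup>2 + 2 * (m - 1) * T^4"
    by (simp add: power2_eq_square algebra_simps eval_nat_numeral)
  also have "\<dots> \<ge> 0" using assms by (intro add_nonneg_nonneg) auto
  finally have "(T^4 - 2 * P * T^2) \<le> (T^2 * m - P)\<^sup>2" by simp
  hence "(T^4 - 2 * P * T^2) / T^5 \<le> (T^2 * m - P)\<^sup>2 / T^5" using assms by (intro divide_right_mono) auto
  moreover have "(T^4 - 2 * P * T^2) / T^5 = 1 / T - 2 / T ^ 3 * P" using assms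
    by (simp add: field_simps eval_nat_numeral)
  ultimately show ?thesis by simp
qed


lemma cmod_sq_Re: "(cmod z)\<^sup>2 = Re (z * cnj z)"
  by (simp add: complex_mult_cnj cmod_power2)

lemma bures_eq:
  assumes T: "T \<ge> 1" and states: "\<forall>t<T. is_state d (\<rho>s t)"
  shows "bures_chi2 d e q (\<lambda>a b. (1 / of_nat T) * (\<Sum>t<T. \<rho>s t a b)) + 1
       = (\<Sum>s<T. \<Sum>t<T. Re (gc d e q \<rho>s s t)) / real T ^ 2"
proof -
  define \<rho> where "\<rho> = (\<lambda>a b. (1 / of_nat T) * (\<Sum>t<T. \<rho>s t a b))"
  define c :: complex where "c = 1 / of_nat T"
  have pb: "pr d e \<rho> i j = c * (\<Sum>t<T. pr d e (\<rho>s t) i j)" for i j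
    unfolding \<rho>_def c_def by (rule pr_avg)
  have cnjpb: "cnj (pr d e \<rho> i j) = pr d e \<rho> j i" for i j
    unfolding pb cnj_sum using states by (simp add: c_def pr_cnj)
  have "bures_chi2 d e q \<rho> + 1 = (\<Sum>i<d. \<Sum>j<d. 2 / (q i + q j) * (cmod (pr d e \<rho> i j))\<^sup>2)"
    unfolding bures_chi2_def pr_def by simp
  also have "\<dots> = Re (\<Sum>i<d. \<Sum>j<d. Wc q i j * (pr d e \<rho> i j * pr d e \<rho> j i))"
    unfolding Re_sum cmod_sq_Re cnjpb Wc_real by simp
  also have "(\<Sum>i<d. \<Sum>j<d. Wc q i j * (pr d e \<rho> i j * pr d e \<rho> j i))
      = c * c * (\<Sum>i<d. \<Sum>j<d. \<Sum>s<T. \<Sum>t<T. Wc q i j * pr d e (\<rho>s s) j i * pr d e (\<rho>s t) i j)"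
    unfolding pb by (simp add: sum_distrib_left sum_distrib_right mult_ac)
  also have "\<dots> = c * c * (\<Sum>s<T. \<Sum>t<T. gc d e q \<rho>s t s)"
    unfolding gc_def by (subst swap4) simp
  also have "(\<Sum>s<T. \<Sum>t<T. gc d e q \<rho>s t s) = (\<Sum>s<T. \<Sum>t<T. gc d e q \<rho>s s t)"
    by (rule sum.swap)
  also have "c * c = complex_of_real (1 / real T ^ 2)" unfolding c_def by (simp add: power2_eq_square)
  finally show ?thesis unfolding \<rho>_def by (simp add: Re_sum)
qed


lemma sum_q:
  assumes onb: "orthonormal_basis d e" and sig: "is_state d \<sigma>"
    and eig: "\<forall>a<d. \<forall>b<d. \<sigma> a b = (\<Sum>i<d. complex_of_real (q i) * e i a * cnj (e i b))"
  shows "(\<Sum>i<d. q i) = 1"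
proof -
  have "1 = (\<Sum>a<d. \<sigma> a a)" using state_trace[OF sig] by simp
  also have "\<dots> = (\<Sum>a<d. \<Sum>i<d. complex_of_real (q i) * e i a * cnj (e i a))" using eig by simp
  also have "\<dots> = (\<Sum>i<d. complex_of_real (q i) * (\<Sum>a<d. cnj (e i a) * e i a))"
    by (subst sum.swap) (simp add: sum_distrib_left mult_ac)
  also have "\<dots> = (\<Sum>i<d. complex_of_real (q i))"
    using onb unfolding orthonormal_basis_def by (intro sum.cong refl) simp
  finally have "complex_of_real (\<Sum>i<d. q i) = 1" by simp
  thus ?thesis by (metis of_real_eq_1_iff)
qed

lemma weighted_ge1:
  fixes x q :: "nat \<Rightarrow> real"
  assumes q: "\<forall>i<d. 0 < q i" and sq: "(\<Sum>i<d. q i) = 1" and sx: "(\<Sum>i<d. x i) = 1"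
  shows "(\<Sum>i<d. (x i)\<^sup>2 / q i) \<ge> 1"
proof -
  have "0 \<le> (\<Sum>i<d. (x i - q i)\<^sup>2 / q i)" using q by (intro sum_nonneg) auto
  also have "\<dots> = (\<Sum>i<d. (x i)\<^sup>2 / q i - 2 * x i + q i)"
    using q by (intro sum.cong refl) (auto simp: field_simps power2_eq_square)
  also have "\<dots> = (\<Sum>i<d. (x i)\<^sup>2 / q i) - 2 * (\<Sum>i<d. x i) + (\<Sum>i<d. q i)"
    by (simp add: sum.distrib sum_subtractf sum_distrib_left)
  finally show ?thesis using sq sx by simp
qed

lemma bures_nonneg:
  assumes onb: "orthonormal_basis d e" and q: "\<forall>i<d. 0 < q i" and sq: "(\<Sum>i<d. q i) = 1"
    and tr: "(\<Sum>a<d. \<rho> a a) = 1"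
  shows "0 \<le> bures_chi2 d e q \<rho>"
proof -
  have "1 \<le> (\<Sum>i<d. (Re (pr d e \<rho> i i))\<^sup>2 / q i)"
  proof (rule weighted_ge1[OF q sq])
    show "(\<Sum>i<d. Re (pr d e \<rho> i i)) = 1" using pr_trace[where \<rho>=\<rho>, OF onb tr] by (metis Re_sum one_complex.simps(1))
  qed
  also have "\<dots> \<le> (\<Sum>i<d. 2 / (q i + q i) * (cmod (pr d e \<rho> i i))\<^sup>2)"
  proof (intro sum_mono)
    fix i assume i: "i \<in> {..<d}"
    have "(Re (pr d e \<rho> i i))\<^sup>2 \<le> (cmod (pr d e \<rho> i i))\<^sup>2" by (simp add: abs_Re_le_cmod power2_le_iff_abs_le)
    thus "(Re (pr d e \<rho> i i))\<^sup>2 / q i \<le> 2 / (q i + q i) * (cmod (pr d e \<rho> i i))\<^sup>2"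
      using q i by (simp add: divide_right_mono less_imp_le)
  qed
  also have "\<dots> \<le> (\<Sum>i<d. \<Sum>j<d. 2 / (q i + q j) * (cmod (pr d e \<rho> i j))\<^sup>2)"
  proof (intro sum_mono)
    fix i assume i: "i \<in> {..<d}"
    show "2 / (q i + q i) * (cmod (pr d e \<rho> i i))\<^sup>2 \<le> (\<Sum>j<d. 2 / (q i + q j) * (cmod (pr d e \<rho> i j))\<^sup>2)"
      using q i by (intro member_le_sum[where f="\<lambda>j. 2 / (q i + q j) * (cmod (pr d e \<rho> i j))\<^sup>2"]) (auto intro!: divide_nonneg_pos add_pos_pos)
  qed
  finally show ?thesis unfolding bures_chi2_def pr_def by simp
qed


theorem lemma8p10:
  "\<exists>K > (0::real). \<forall>(d::nat) (T::nat) (\<sigma>::nat \<Rightarrow> nat \<Rightarrow> complex) (e::nat \<Rightarrow> nat \<Rightarrow> complex)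
       (q::nat \<Rightarrow> real) (\<rho>s::nat \<Rightarrow> nat \<Rightarrow> nat \<Rightarrow> complex).
     1 \<le> d \<longrightarrow> 1 \<le> T \<longrightarrow>
     is_state d \<sigma> \<longrightarrow>
     orthonormal_basis d e \<longrightarrow>
     (\<forall>i<d. 0 < q i) \<longrightarrow>
     (\<forall>a<d. \<forall>b<d. \<sigma> a b = (\<Sum>i<d. complex_of_real (q i) * e i a * cnj (e i b))) \<longrightarrow>
     (\<forall>t<T. is_state d (\<rho>s t)) \<longrightarrow>
     (let \<gamma> = Min (q ` {..<d});
          \<rho> = (\<lambda>a b. (1 / of_nat T) * (\<Sum>t<T. \<rho>s t a b));
          \<mu> = bures_chi2 d e q \<rho>;
          C = Cop d e q;
          J = idx d T \<times> idx d T;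
          \<rho>T = tensor_states T \<rho>s
      in (\<Sum>t<T. Re (expect J (tens \<rho>T \<rho>T)
                   (mmul J (mmul J (mmul J (tens (Mop T C t) idop) (Fswap t))
                                   (tens (Mop T C t) idop)) (Fswap t))))
         \<ge> (1 / real T - 2 / real T ^ 3 *
               (\<Sum>t<T. Re (expect ({..<d} \<times> {..<d}) (tens (\<rho>s t) (\<rho>s t)) C)))
           - K * (real d ^ 2 / real T ^ 2 + real d * \<mu> / (\<gamma> * real T ^ 2)))"
proof (intro exI[of _ "1::real"] conjI allI impI)
  show "(0::real) < 1" by simp
next
  fix d T :: nat and \<sigma> e :: "nat \<Rightarrow> nat \<Rightarrow> complex" and q :: "nat \<Rightarrow> real" and \<rho>s :: "nat \<Rightarrow> nat \<Rightarrow> nat \<Rightarrow> complex"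
  assume d: "1 \<le> d" and T: "1 \<le> T" and sig: "is_state d \<sigma>" and onb: "orthonormal_basis d e"
    and qpos: "\<forall>i<d. 0 < q i"
    and eig: "\<forall>a<d. \<forall>b<d. \<sigma> a b = (\<Sum>i<d. complex_of_real (q i) * e i a * cnj (e i b))"
    and states: "\<forall>t<T. is_state d (\<rho>s t)"
  define \<gamma> where "\<gamma> = Min (q ` {..<d})"
  define \<rho> where "\<rho> = (\<lambda>a b. (1 / of_nat T) * (\<Sum>t<T. \<rho>s t a b))"
  define \<mu> where "\<mu> = bures_chi2 d e q \<rho>"
  define J where "J = idx d T \<times> idx d T"
  define g where "g s t = Re (gc d e q \<rho>s s t)" for s t
  define G where "G t = (\<Sum>s\<in>{..<T} - {t}. g s t)" for t
  define P where "P = (\<Sum>t<T. Re (expect ({..<d} \<times> {..<d}) (tens (\<rho>s t) (\<rho>s t)) (Cop d e q)))"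
  define LHS where "LHS = (\<Sum>t<T. Re (expect J (tens (tensor_states T \<rho>s) (tensor_states T \<rho>s))
                   (mmul J (mmul J (mmul J (tens (Mop T (Cop d e q) t) idop) (Fswap t))
                                   (tens (Mop T (Cop d e q) t) idop)) (Fswap t))))"
  have Tpos: "real T \<ge> 1" using T by simp
  have "0 \<in> {..<d}" using d by simp
  hence "\<gamma> \<in> q ` {..<d}" unfolding \<gamma>_def by (intro Min_in) auto
  hence gpos: "\<gamma> > 0" using qpos by auto
  have trrho: "(\<Sum>a<d. \<rho> a a) = 1"
  proof -
    have "(\<Sum>a<d. \<rho> a a) = (1 / of_nat T) * (\<Sum>t<T. \<Sum>a<d. \<rho>s t a a)"
      unfolding \<rho>_def by (simp add: sum_distrib_left sum.swap[of _ "{..<d}"])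
    also have "(\<Sum>t<T. \<Sum>a<d. \<rho>s t a a) = of_nat T" using states state_trace by simp
    finally show ?thesis using T by simp
  qed
  have sq: "(\<Sum>i<d. q i) = 1" by (rule sum_q[OF onb sig eig])
  have mu0: "0 \<le> \<mu>" unfolding \<mu>_def by (rule bures_nonneg[where \<rho>=\<rho>, OF onb qpos sq trrho])
  have err0: "0 \<le> real d ^ 2 / real T ^ 2 + real d * \<mu> / (\<gamma> * real T ^ 2)"
    using mu0 gpos T by (intro add_nonneg_nonneg divide_nonneg_pos mult_nonneg_nonneg) auto
  have P_eq: "P = (\<Sum>t<T. g t t)"
    unfolding P_def g_def expect_C gc_def by (simp add: mult_ac)
  have allg: "(\<Sum>t<T. \<Sum>s<T. g s t) = real T ^ 2 * (\<mu> + 1)"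
  proof -
    have "\<mu> + 1 = (\<Sum>s<T. \<Sum>t<T. g s t) / real T ^ 2"
      unfolding \<mu>_def \<rho>_def g_def by (rule bures_eq[where \<rho>s=\<rho>s, OF T states])
    hence h: "(\<Sum>s<T. \<Sum>t<T. g s t) = real T ^ 2 * (\<mu> + 1)" using T by (simp add: field_simps)
    show ?thesis using h sum.swap[of "\<lambda>s t. g s t" "{..<T}" "{..<T}"] by simp
  qed
  have sumG: "(\<Sum>t<T. G t) = real T ^ 2 * (\<mu> + 1) - P"
  proof -
    have "G t = (\<Sum>s<T. g s t) - g t t" if "t < T" for t
      unfolding G_def using that by (simp add: sum_diff1)
    hence "(\<Sum>t<T. G t) = (\<Sum>t<T. (\<Sum>s<T. g s t) - g t t)" by simp
    also have "\<dots> = real T ^ 2 * (\<mu> + 1) - P" using allg P_eq by (simp add: sum_subtractf)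
    finally show ?thesis .
  qed
  have "LHS \<ge> (\<Sum>t<T. (1 / real T ^ 2) ^ 2 * (G t)\<^sup>2)"
    unfolding LHS_def J_def G_def g_def using onb states
    by (intro sum_mono LHS_t_ge) auto
  moreover have "(\<Sum>t<T. (1 / real T ^ 2) ^ 2 * (G t)\<^sup>2) \<ge> (real T ^ 2 * (\<mu> + 1) - P)\<^sup>2 / real T ^ 5"
  proof -
    have "(\<Sum>t<T. G t)\<^sup>2 \<le> real T * (\<Sum>t<T. (G t)\<^sup>2)" using sq_sum_le[of "{..<T}" G] by simp
    hence "(real T ^ 2 * (\<mu> + 1) - P)\<^sup>2 / real T ^ 5 \<le> real T * (\<Sum>t<T. (G t)\<^sup>2) / real T ^ 5"
      unfolding sumG using T by (intro divide_right_mono) auto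
    also have "\<dots> = (1 / real T ^ 2) ^ 2 * (\<Sum>t<T. (G t)\<^sup>2)"
      using T by (simp add: field_simps eval_nat_numeral)
    also have "\<dots> = (\<Sum>t<T. (1 / real T ^ 2) ^ 2 * (G t)\<^sup>2)"
      by (simp add: sum_distrib_left)
    finally show ?thesis .
  qed
  moreover have "(real T ^ 2 * (\<mu> + 1) - P)\<^sup>2 / real T ^ 5 \<ge> 1 / real T - 2 / real T ^ 3 * P"
    using real_ineq[OF Tpos, of "\<mu> + 1" P] mu0 by simp
  ultimately have main: "LHS \<ge> 1 / real T - 2 / real T ^ 3 * P" by linarith
  have final: "1 / real T - 2 / real T ^ 3 * P - 1 * (real d ^ 2 / real T ^ 2 + real d * \<mu> / (\<gamma> * real T ^ 2)) \<le> LHS"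
    using main err0 by (smt (verit))
  show "let \<gamma> = Min (q ` {..<d});
          \<rho> = (\<lambda>a b. (1 / of_nat T) * (\<Sum>t<T. \<rho>s t a b));
          \<mu> = bures_chi2 d e q \<rho>;
          C = Cop d e q;
          J = idx d T \<times> idx d T;
          \<rho>T = tensor_states T \<rho>s
      in (\<Sum>t<T. Re (expect J (tens \<rho>T \<rho>T)
                   (mmul J (mmul J (mmul J (tens (Mop T C t) idop) (Fswap t))
                                   (tens (Mop T C t) idop)) (Fswap t))))
         \<ge> (1 / real T - 2 / real T ^ 3 *
               (\<Sum>t<T. Re (expect ({..<d} \<times> {..<d}) (tens (\<rho>s t) (\<rho>s t)) C)))
           - 1 * (real d ^ 2 / real T ^ 2 + real d * \<mu> / (\<gamma> * real T ^ 2))"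
    using final unfolding Let_def LHS_def P_def J_def \<gamma>_def \<mu>_def \<rho>_def .
qed

end
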